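(* Let $V_k$ be the complex vector space spanned by all $\Gamma^\mu_r$ with $1\le r\le u-1$ and $\mu\in r-1+2\mathbb Z$. Then $V_k$ is spanned by $\{\Gamma^\mu_r:(\mu;r)\in\mathbf B_k\}$, where $\mathbf B_k$ is the set of pairs $(\mu;r)$ of integers with $\mu\equiv r-1\pmod 2$ and: if $u$ is odd, $0\le\mu\le w$ and $1\le r\le\frac{u-1}2$; if $u$ is even, either $0\le\mu\le w$ and $1\le r\le\frac u2-1$, or $0\le\mu\le\frac w2$ and $r=\frac u2$.
   Context: $u,v\in\mathbb Z_{\ge2}$ coprime with $u<2v$; $k=-2+u/v<0$, $w=2v-u$, $\mathbb L=2w\mathbb Z$. $\chi^{u,v}_{r,s}(q)=\eta(q)^{-1}\sum_{n\in\mathbb Z}(q^{(2uvn+vr-us)^2/4uv}-q^{(2uvn+vr+us)^2/4uv})$, $\eta$ Dedekind's eta. For $\mu\in\frac1v\mathbb Z$, $\theta'_{\mu+\mathbb L}(q)=-\frac1{2w}\sum_{\lambda\in\mu+\mathbb L}\lambda q^{-\lambda^2/4k}$. For $1\le r\le u-1$ and $\mu\in r-1+2\mathbb Z$, $$\Gamma^\mu_r(q)=\sum_{s=1}^{v-1}(-1)^{s-1}\frac{\chi^{u,v}_{r,s}(q)}{\eta(q)}\big[\theta'_{\mu+sk+\mathbb L}(q)-\theta'_{\mu-sk+\mathbb L}(q)\big].$$ *)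

theory Defs
  imports "HOL-Analysis.Analysis"
begin

text \<open>All q-series are regarded as functions of tau in the upper half-plane,
  with q = exp(2 pi i tau) and q powr a := exp(2 pi i a tau) for real a.\<close>

definition qp :: "real \<Rightarrow> complex \<Rightarrow> complex" where
  "qp a \<tau> = exp (2 * of_real pi * \<i> * of_real a * \<tau>)"

definition eta :: "complex \<Rightarrow> complex" where
  "eta \<tau> = qp (1/24) \<tau> * (\<Prod>n. (1 - qp (real (Suc n)) \<tau>))"

definition kk :: "nat \<Rightarrow> nat \<Rightarrow> real" where
  "kk u v = -2 + real u / real v"

definition ww :: "nat \<Rightarrow> nat \<Rightarrow> int" where
  "ww u v = 2 * int v - int u"

definition chi :: "nat \<Rightarrow> nat \<Rightarrow> int \<Rightarrow> int \<Rightarrow> complex \<Rightarrow> complex" where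
  "chi u v r s \<tau> =
     (\<Sum>\<^sub>\<infinity>n::int.
        qp ((2*(real u)*(real v)*(of_int n) + (real v)*(of_int r) - (real u)*(of_int s))^2 / (4*(real u)*(real v))) \<tau>
      - qp ((2*(real u)*(real v)*(of_int n) + (real v)*(of_int r) + (real u)*(of_int s))^2 / (4*(real u)*(real v))) \<tau>)
     / eta \<tau>"

definition thetap :: "nat \<Rightarrow> nat \<Rightarrow> real \<Rightarrow> complex \<Rightarrow> complex" where
  "thetap u v \<mu> \<tau> =
     - (1 / (2 * of_int (ww u v))) *
       (\<Sum>\<^sub>\<infinity>n::int. (let l = \<mu> + 2 * of_int (ww u v) * of_int n
                       in of_real l * qp (- (l^2) / (4 * kk u v)) \<tau>))"

definition Gam :: "nat \<Rightarrow> nat \<Rightarrow> int \<Rightarrow> int \<Rightarrow> complex \<Rightarrow> complex" where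
  "Gam u v \<mu> r \<tau> =
     (if Im \<tau> > 0 then
        (\<Sum>s = 1..int v - 1. (-1) ^ nat (s - 1) * (chi u v r s \<tau> / eta \<tau>) *
            (thetap u v (of_int \<mu> + of_int s * kk u v) \<tau>
             - thetap u v (of_int \<mu> - of_int s * kk u v) \<tau>))
      else 0)"

definition cspan :: "('a \<Rightarrow> complex) set \<Rightarrow> ('a \<Rightarrow> complex) set" where
  "cspan S = {f. \<exists>T c. finite T \<and> T \<subseteq> S \<and> f = (\<lambda>x. \<Sum>g\<in>T. c g * g x)}"

definition Bk :: "nat \<Rightarrow> nat \<Rightarrow> (int \<times> int) set" where
  "Bk u v = {(\<mu>, r). \<mu> mod 2 = (r - 1) mod 2 \<and>
     ((odd u \<and> 0 \<le> \<mu> \<and> \<mu> \<le> ww u v \<and> 1 \<le> r \<and> 2 * r \<le> int u - 1)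
    \<or> (even u \<and> ((0 \<le> \<mu> \<and> \<mu> \<le> ww u v \<and> 1 \<le> r \<and> 2 * r \<le> int u - 2)
                 \<or> (0 \<le> \<mu> \<and> 2 * \<mu> \<le> ww u v \<and> 2 * r = int u))))}"

end

theory Submission
  imports Defs
begin


lemma summ_exp_nat:
  assumes "t > 0"
  shows "(\<lambda>n::nat. exp (- t * real n)) summable_on UNIV"
proof -
  have "summable (\<lambda>n::nat. exp (- t) ^ n)"
    using assms by (intro summable_geometric) auto
  then have "summable (\<lambda>n::nat. exp (- t * real n))"
    by (simp add: exp_of_nat_mult[symmetric] mult.commute)
  then show ?thesis
    by (subst summable_on_UNIV_nonneg_real_iff) auto
qed

lemma summ_exp_int:
  assumes "t > 0"
  shows "(\<lambda>n::int. exp (- t * \<bar>real_of_int n\<bar>)) summable_on UNIV"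
proof -
  let ?g = "\<lambda>n::int. exp (- t * \<bar>real_of_int n\<bar>)"
  have U: "(UNIV::int set) = range int \<union> range (\<lambda>n. - int (Suc n))"
  proof -
    { fix x :: int
      have "x \<in> range int \<union> range (\<lambda>n. - int (Suc n))"
      proof (cases "x \<ge> 0")
        case True then show ?thesis by (metis UnI1 nonneg_int_cases rangeI)
      next
        case False
        then have "x = - int (Suc (nat (- x - 1)))" by simp
        then show ?thesis by blast
      qed }
    then show ?thesis by blast
  qed
  have 1: "?g summable_on range int"
    by (subst summable_on_reindex) (use summ_exp_nat[OF assms] in \<open>auto simp: o_def\<close>)
  have 2: "?g summable_on range (\<lambda>n. - int (Suc n))"
  proof (subst summable_on_reindex)
    show "inj (\<lambda>n. - int (Suc n))" by (auto simp: inj_def)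
    have "(\<lambda>n::nat. exp (- t * real n) * exp (-t)) summable_on UNIV"
      by (intro summable_on_cmult_left summ_exp_nat assms)
    moreover have "(\<lambda>n::nat. exp (- t * real n) * exp (-t)) = ?g \<circ> (\<lambda>n. - int (Suc n))"
      by (auto simp: fun_eq_iff exp_add[symmetric] algebra_simps)
    ultimately show "(?g \<circ> (\<lambda>n. - int (Suc n))) summable_on UNIV" by simp
  qed
  have "?g summable_on (range int \<union> range (\<lambda>n. - int (Suc n)))"
    by (rule summable_on_Un_disjoint[OF 1 2]) auto
  then show ?thesis using U by simp
qed

lemma sq_ge: "(x::real)^2 \<ge> \<bar>x\<bar> - 1"
proof -
  have "0 \<le> (\<bar>x\<bar> - 1/2)^2" by simp
  also have "\<dots> = x^2 - \<bar>x\<bar> + 1/4" by (simp add: power2_eq_square algebra_simps)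
  finally show ?thesis by linarith
qed

lemma norm_qp: "norm (qp a \<tau>) = exp (- 2 * pi * a * Im \<tau>)"
  by (simp add: qp_def norm_exp_eq_Re)

lemma summ_qp:
  fixes a b D :: real
  assumes "\<bar>a\<bar> \<ge> 1" "D > 0" "Im \<tau> > 0"
  shows "(\<lambda>n::int. qp ((a * of_int n + b)^2 / D) \<tau>) summable_on UNIV"
proof -
  define t where "t = 2 * pi * Im \<tau> / D"
  have t: "t > 0" using assms by (simp add: t_def)
  have "(\<lambda>n::int. exp (t * (\<bar>b\<bar> + 1)) * exp (- t * \<bar>real_of_int n\<bar>)) summable_on UNIV"
    by (intro summable_on_cmult_right summ_exp_int t)
  then have "(\<lambda>n::int. norm (qp ((a * of_int n + b)^2 / D) \<tau>)) summable_on UNIV"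
  proof (rule summable_on_comparison_test)
    fix n :: int show "0 \<le> norm (qp ((a * of_int n + b)^2 / D) \<tau>)" by simp
  next
    fix n :: int
    let ?x = "a * of_int n + b"
    have sq: "?x^2 \<ge> \<bar>?x\<bar> - 1"
      by (rule sq_ge)
    have "\<bar>?x\<bar> \<ge> \<bar>a\<bar> * \<bar>of_int n\<bar> - \<bar>b\<bar>"
      using abs_triangle_ineq2[of "a * of_int n" "- b"] by (simp add: abs_mult)
    moreover have "\<bar>a\<bar> * \<bar>real_of_int n\<bar> \<ge> \<bar>real_of_int n\<bar>"
      using assms(1) by (simp add: mult_right_mono[of 1 "\<bar>a\<bar>" "\<bar>real_of_int n\<bar>", simplified])
    ultimately have "?x^2 \<ge> \<bar>real_of_int n\<bar> - \<bar>b\<bar> - 1" using sq by linarith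
    then have "t * ?x^2 \<ge> t * (\<bar>real_of_int n\<bar> - \<bar>b\<bar> - 1)"
      using t by (intro mult_left_mono) auto
    then have "- 2 * pi * (?x^2 / D) * Im \<tau> \<le> t * (\<bar>b\<bar> + 1) + - t * \<bar>real_of_int n\<bar>"
    proof -
      have "- 2 * pi * (?x^2 / D) * Im \<tau> = - t * ?x^2" by (simp add: t_def)
      then show ?thesis using \<open>t * ?x^2 \<ge> _\<close> by (simp add: algebra_simps)
    qed
    then show "norm (qp (?x^2 / D) \<tau>) \<le> exp (t * (\<bar>b\<bar> + 1)) * exp (- t * \<bar>real_of_int n\<bar>)"
      by (simp add: norm_qp exp_add[symmetric])
  qed
  then show ?thesis by (rule abs_summable_summable)
qed



lemma infsum_diff':
  fixes f g :: "'a \<Rightarrow> complex"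
  assumes "f summable_on A" "g summable_on A"
  shows "infsum (\<lambda>x. f x - g x) A = infsum f A - infsum g A"
proof -
  have "infsum (\<lambda>x. f x + - g x) A = infsum f A + infsum (\<lambda>x. - g x) A"
    by (rule infsum_add) (use assms summable_on_uminus in auto)
  then show ?thesis by (simp add: infsum_uminus)
qed

lemma bij_shift: "bij_betw (\<lambda>n::int. n + j) UNIV UNIV"
  by (rule bij_betwI[where g="\<lambda>n. n - j"]) auto

lemma bij_neg: "bij_betw (\<lambda>n::int. - n) UNIV UNIV"
  by (rule bij_betwI[where g="\<lambda>n. - n"]) auto

lemma bij_negm1: "bij_betw (\<lambda>n::int. - n - 1) UNIV UNIV"
  by (rule bij_betwI[where g="\<lambda>n. - n - 1"]) auto

lemma thetap_shift:
  "thetap u v (x + 2 * of_int (ww u v) * of_int j) \<tau> = thetap u v x \<tau>"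
proof -
  define F where "F = (\<lambda>l::real. of_real l * qp (- (l^2) / (4 * kk u v)) \<tau>)"
  have "(\<Sum>\<^sub>\<infinity>n::int. F (x + 2 * of_int (ww u v) * of_int j + 2 * of_int (ww u v) * of_int n))
      = (\<Sum>\<^sub>\<infinity>n::int. (\<lambda>n. F (x + 2 * of_int (ww u v) * of_int n)) (n + j))"
    by (simp add: algebra_simps)
  also have "\<dots> = (\<Sum>\<^sub>\<infinity>n::int. F (x + 2 * of_int (ww u v) * of_int n))"
    by (rule infsum_reindex_bij_betw[OF bij_shift])
  finally show ?thesis unfolding thetap_def F_def Let_def by simp
qed

lemma thetap_neg: "thetap u v (- x) \<tau> = - thetap u v x \<tau>"
proof -
  define F where "F = (\<lambda>l::real. of_real l * qp (- (l^2) / (4 * kk u v)) \<tau>)"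
  have Fm: "F (- l) = - F l" for l by (simp add: F_def)
  have "(\<Sum>\<^sub>\<infinity>n::int. F (- x + 2 * of_int (ww u v) * of_int n))
      = (\<Sum>\<^sub>\<infinity>n::int. - (\<lambda>n. F (x + 2 * of_int (ww u v) * of_int n)) (- n))"
    by (rule infsum_cong) (metis Fm minus_add_distrib minus_minus mult_minus_right of_int_minus)
  also have "\<dots> = - (\<Sum>\<^sub>\<infinity>n::int. (\<lambda>n. F (x + 2 * of_int (ww u v) * of_int n)) (- n))"
    by (rule infsum_uminus)
  also have "(\<Sum>\<^sub>\<infinity>n::int. (\<lambda>n. F (x + 2 * of_int (ww u v) * of_int n)) (- n))
      = (\<Sum>\<^sub>\<infinity>n::int. F (x + 2 * of_int (ww u v) * of_int n))"
    by (rule infsum_reindex_bij_betw[OF bij_neg])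
  finally show ?thesis unfolding thetap_def F_def Let_def by simp
qed

lemma chi_sym:
  assumes "u \<ge> 1" "v \<ge> 1" "Im \<tau> > 0"
  shows "chi u v (int u - r) (int v - s) \<tau> = chi u v r s \<tau>"
proof -
  define U where "U = real u"
  define V where "V = real v"
  have UV: "U \<ge> 1" "V \<ge> 1" using assms by (auto simp: U_def V_def)
  have a1: "\<bar>2 * U * V\<bar> \<ge> 1"
  proof -
    have "U * V \<ge> 1 * 1" using UV by (intro mult_mono) auto
    then show ?thesis by simp
  qed
  have D: "4 * U * V > 0" using UV by simp
  define f where "f = (\<lambda>n::int. qp ((2*U*V*(of_int n) + V*(of_int r) - U*(of_int s))^2 / (4*U*V)) \<tau>)"
  define g where "g = (\<lambda>n::int. qp ((2*U*V*(of_int n) + V*(of_int r) + U*(of_int s))^2 / (4*U*V)) \<tau>)"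
  have fs: "f summable_on UNIV"
    using summ_qp[OF a1 D assms(3), of "V*(of_int r) - U*(of_int s)"]
    unfolding f_def by (simp add: algebra_simps)
  have gs: "g summable_on UNIV"
    using summ_qp[OF a1 D assms(3), of "V*(of_int r) + U*(of_int s)"]
    unfolding g_def by (simp add: algebra_simps)
  have fs': "(\<lambda>n. f (- n)) summable_on UNIV"
    using fs summable_on_reindex_bij_betw[OF bij_neg] by blast
  have gs': "(\<lambda>n. g (- n - 1)) summable_on UNIV"
    using gs summable_on_reindex_bij_betw[OF bij_negm1] by blast
  have e1: "(2*U*V*(of_int n) + V*(of_int (int u - r)) - U*(of_int (int v - s)))^2
        = (2*U*V*(of_int (-n)) + V*(of_int r) - U*(of_int s))^2" for n
  proof -
    have "2*U*V*(of_int n) + V*(of_int (int u - r)) - U*(of_int (int v - s))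
        = - (2*U*V*(of_int (-n)) + V*(of_int r) - U*(of_int s))"
      by (simp add: U_def V_def algebra_simps)
    then show ?thesis by (metis power2_minus)
  qed
  have e2: "(2*U*V*(of_int n) + V*(of_int (int u - r)) + U*(of_int (int v - s)))^2
        = (2*U*V*(of_int (-n - 1)) + V*(of_int r) + U*(of_int s))^2" for n
  proof -
    have "2*U*V*(of_int n) + V*(of_int (int u - r)) + U*(of_int (int v - s))
        = - (2*U*V*(of_int (-n - 1)) + V*(of_int r) + U*(of_int s))"
      by (simp add: U_def V_def algebra_simps)
    then show ?thesis by (metis power2_minus)
  qed
  have "(\<Sum>\<^sub>\<infinity>n::int.
        qp ((2*U*V*(of_int n) + V*(of_int (int u - r)) - U*(of_int (int v - s)))^2 / (4*U*V)) \<tau>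
      - qp ((2*U*V*(of_int n) + V*(of_int (int u - r)) + U*(of_int (int v - s)))^2 / (4*U*V)) \<tau>)
     = (\<Sum>\<^sub>\<infinity>n::int. f (- n) - g (- n - 1))"
    unfolding f_def g_def e1 e2 by simp
  also have "\<dots> = (\<Sum>\<^sub>\<infinity>n::int. f (- n)) - (\<Sum>\<^sub>\<infinity>n::int. g (- n - 1))"
    by (rule infsum_diff'[OF fs' gs'])
  also have "\<dots> = infsum f UNIV - infsum g UNIV"
    using infsum_reindex_bij_betw[OF bij_neg, of f] infsum_reindex_bij_betw[OF bij_negm1, of g]
    by simp
  also have "\<dots> = (\<Sum>\<^sub>\<infinity>n::int. f n - g n)"
    by (rule infsum_diff'[OF fs gs, symmetric])
  finally show ?thesis unfolding chi_def f_def g_def U_def V_def by simp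
qed



lemma Gam_shift: "Gam u v (\<mu> + 2 * ww u v * j) r \<tau> = Gam u v \<mu> r \<tau>"
proof -
  have e: "of_int (\<mu> + 2 * ww u v * j) + y = (of_int \<mu> + y) + 2 * of_int (ww u v) * of_int j" for y :: real
    by simp
  have e2: "of_int (\<mu> + 2 * ww u v * j) - y = (of_int \<mu> - y) + 2 * of_int (ww u v) * of_int j" for y :: real
    by simp
  show ?thesis unfolding Gam_def e e2 thetap_shift ..
qed

lemma Gam_neg: "Gam u v (- \<mu>) r \<tau> = Gam u v \<mu> r \<tau>"
proof -
  have e: "of_int (- \<mu>) + y = - (of_int \<mu> - y)" for y :: real by simp
  have e2: "of_int (- \<mu>) - y = - (of_int \<mu> + y)" for y :: real by simp
  show ?thesis unfolding Gam_def e e2 thetap_neg by simp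
qed

lemma sign_lemma:
  assumes "1 \<le> t" "t \<le> int v - 1"
  shows "(-1::complex) ^ nat (int v - t - 1) = (-1) ^ v * (-1) ^ nat (t - 1)"
proof -
  define k where "k = nat (int v - t - 1)"
  define m where "m = nat (t - 1)"
  have km: "k + m + 2 = v" using assms unfolding k_def m_def by linarith
  have "even k \<longleftrightarrow> (even v \<longleftrightarrow> even m)" using km by presburger
  then show ?thesis unfolding k_def[symmetric] m_def[symmetric]
    by (auto simp: minus_one_power_iff)
qed

lemma Gam_refl:
  assumes "u \<ge> 1" "v \<ge> 1"
  shows "Gam u v \<mu> (int u - r) \<tau> = (-1) ^ (v + 1) * Gam u v (\<mu> - ww u v) r \<tau>"
proof (cases "Im \<tau> > 0")
  case False then show ?thesis by (simp add: Gam_def)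
next
  case True
  let ?T = "\<lambda>m s. thetap u v (of_int m + of_int s * kk u v) \<tau> - thetap u v (of_int m - of_int s * kk u v) \<tau>"
  have vk: "real v * kk u v = - of_int (ww u v)"
    using assms by (simp add: kk_def ww_def field_simps)
  have th: "?T \<mu> (int v - t) = - ?T (\<mu> - ww u v) t" for t
  proof -
    have a: "of_int \<mu> + of_int (int v - t) * kk u v = of_int (\<mu> - ww u v) - of_int t * kk u v"
      using vk by (simp add: algebra_simps)
    have b: "of_int \<mu> - of_int (int v - t) * kk u v
        = (of_int (\<mu> - ww u v) + of_int t * kk u v) + 2 * of_int (ww u v) * of_int (1::int)"
      using vk by (simp add: algebra_simps)
    show ?thesis unfolding a b thetap_shift by simp
  qed
  have "Gam u v \<mu> (int u - r) \<tau> =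
      (\<Sum>s = 1..int v - 1. (-1) ^ nat (s - 1) * (chi u v (int u - r) s \<tau> / eta \<tau>) * ?T \<mu> s)"
    using True by (simp add: Gam_def)
  also have "\<dots> = (\<Sum>t = 1..int v - 1. (-1) ^ nat (int v - t - 1) * (chi u v (int u - r) (int v - t) \<tau> / eta \<tau>) * ?T \<mu> (int v - t))"
    by (rule sum.reindex_bij_witness[of _ "\<lambda>t. int v - t" "\<lambda>s. int v - s"]) auto
  also have "\<dots> = (\<Sum>t = 1..int v - 1. (-1) ^ (v + 1) * ((-1) ^ nat (t - 1) * (chi u v r t \<tau> / eta \<tau>) * ?T (\<mu> - ww u v) t))"
  proof (rule sum.cong[OF refl])
    fix t assume "t \<in> {1..int v - 1}"
    then have t: "1 \<le> t" "t \<le> int v - 1" by auto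
    show "(-1) ^ nat (int v - t - 1) * (chi u v (int u - r) (int v - t) \<tau> / eta \<tau>) * ?T \<mu> (int v - t)
        = (-1) ^ (v + 1) * ((-1) ^ nat (t - 1) * (chi u v r t \<tau> / eta \<tau>) * ?T (\<mu> - ww u v) t)"
      unfolding sign_lemma[OF t] th chi_sym[OF assms True] by (simp add: algebra_simps)
  qed
  also have "\<dots> = (-1) ^ (v + 1) * Gam u v (\<mu> - ww u v) r \<tau>"
    using True by (simp add: Gam_def sum_distrib_left)
  finally show ?thesis .
qed



lemma cspan_scaled:
  assumes "\<forall>f\<in>A. \<exists>g\<in>B. \<exists>c. f = (\<lambda>x. c * g x)"
  shows "cspan A \<subseteq> cspan B"
proof
  fix f assume "f \<in> cspan A"
  then obtain T c where T: "finite T" "T \<subseteq> A" and f: "f = (\<lambda>x. \<Sum>g\<in>T. c g * g x)"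
    unfolding cspan_def by blast
  from assms obtain \<phi> where \<phi>: "\<forall>f\<in>A. \<phi> f \<in> B \<and> (\<exists>c. f = (\<lambda>x. c * \<phi> f x))"
    by metis
  then obtain d where d: "\<forall>f\<in>A. f = (\<lambda>x. d f * \<phi> f x)" by metis
  define e where "e = (\<lambda>h. \<Sum>g\<in>{g\<in>T. \<phi> g = h}. c g * d g)"
  have "f x = (\<Sum>h\<in>\<phi> ` T. e h * h x)" for x
  proof -
    have "f x = (\<Sum>g\<in>T. c g * d g * \<phi> g x)"
      unfolding f using T(2) d by (intro sum.cong refl) (metis mult.assoc subsetD)
    also have "\<dots> = (\<Sum>h\<in>\<phi> ` T. \<Sum>g\<in>{g\<in>T. \<phi> g = h}. c g * d g * \<phi> g x)"
      by (rule sum.image_gen[OF T(1)])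
    also have "\<dots> = (\<Sum>h\<in>\<phi> ` T. e h * h x)"
      unfolding e_def sum_distrib_right by (intro sum.cong refl) auto
    finally show ?thesis .
  qed
  moreover have "finite (\<phi> ` T)" "\<phi> ` T \<subseteq> B" using T \<phi> by auto
  ultimately show "f \<in> cspan B" unfolding cspan_def by blast
qed

lemma mu_red:
  assumes "ww u v > 0"
  shows "\<exists>\<mu>'. 0 \<le> \<mu>' \<and> \<mu>' \<le> ww u v \<and> \<mu>' mod 2 = \<mu> mod 2 \<and> Gam u v \<mu>' r = Gam u v \<mu> r"
proof -
  define w where "w = ww u v"
  define m where "m = \<mu> mod (2 * w)"
  define j where "j = \<mu> div (2 * w)"
  have mu: "\<mu> = m + 2 * w * j" unfolding m_def j_def by simp
  have m: "0 \<le> m" "m < 2 * w" using assms unfolding m_def w_def by auto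
  have G: "Gam u v m r = Gam u v \<mu> r"
    by (rule ext) (simp add: mu w_def Gam_shift)
  have pm: "m mod 2 = \<mu> mod 2" unfolding mu by (simp add: mult.assoc)
  show ?thesis
  proof (cases "m \<le> w")
    case True then show ?thesis using m G pm unfolding w_def by blast
  next
    case False
    have "Gam u v (2 * w - m) r = Gam u v (m + 2 * w * (-1)) r"
      by (rule ext) (metis Gam_neg minus_diff_eq mult_minus1_right diff_conv_add_uminus mult_minus_right)
    also have "\<dots> = Gam u v m r" unfolding w_def by (rule ext) (rule Gam_shift)
    finally have "Gam u v (2 * w - m) r = Gam u v \<mu> r" using G by simp
    moreover have "(2 * w - m) mod 2 = \<mu> mod 2" using pm by presburger
    ultimately show ?thesis using m False unfolding w_def[symmetric] by (intro exI[of _ "2 * w - m"]) auto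
  qed
qed



lemma caseA:
  assumes w: "ww u v > 0" and r: "1 \<le> r" "2 * r \<le> int u - 1" and p: "\<mu> mod 2 = (r - 1) mod 2"
  shows "\<exists>\<mu>'. (\<mu>', r) \<in> Bk u v \<and> Gam u v \<mu> r = Gam u v \<mu>' r"
proof -
  obtain \<mu>' where m: "0 \<le> \<mu>'" "\<mu>' \<le> ww u v" "\<mu>' mod 2 = \<mu> mod 2" "Gam u v \<mu>' r = Gam u v \<mu> r"
    using mu_red[OF w] by blast
  have "(\<mu>', r) \<in> Bk u v"
  proof (cases "odd u")
    case True then show ?thesis using m r p unfolding Bk_def by auto
  next
    case False
    then have "2 * r \<le> int u - 2" using r by presburger
    then show ?thesis using m r p False unfolding Bk_def by auto
  qed
  then show ?thesis using m by metis
qed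



lemma reduce:
  assumes u: "u \<ge> 2" "v \<ge> 2" "u < 2 * v"
    and r: "1 \<le> r" "r \<le> int u - 1" and p: "\<mu> mod 2 = (r - 1) mod 2"
  shows "\<exists>\<mu>' r' c. (\<mu>', r') \<in> Bk u v \<and> Gam u v \<mu> r = (\<lambda>x. c * Gam u v \<mu>' r' x)"
proof -
  have wd: "ww u v = 2 * int v - int u" by (simp add: ww_def)
  have w: "ww u v > 0" using u wd by linarith
  have Rfl: "Gam u v m (int u - r') = (\<lambda>x. (-1) ^ (v + 1) * Gam u v (m - ww u v) r' x)" for m r'
    using u by (intro ext Gam_refl) auto
  consider "2 * r \<le> int u - 1" | "2 * r = int u" | "2 * r \<ge> int u + 1" by linarith
  then show ?thesis
  proof cases
    case 1
    then obtain \<mu>' where "(\<mu>', r) \<in> Bk u v" "Gam u v \<mu> r = Gam u v \<mu>' r"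
      using caseA[OF w r(1) 1 p] by blast
    then show ?thesis by (intro exI[of _ \<mu>'] exI[of _ r] exI[of _ 1]) auto
  next
    case 2
    obtain \<mu>' where m: "0 \<le> \<mu>'" "\<mu>' \<le> ww u v" "\<mu>' mod 2 = \<mu> mod 2" "Gam u v \<mu>' r = Gam u v \<mu> r"
      using mu_red[OF w] by blast
    have eu: "even u" using 2 by presburger
    show ?thesis
    proof (cases "2 * \<mu>' \<le> ww u v")
      case True
      then have "(\<mu>', r) \<in> Bk u v" using m 2 p eu unfolding Bk_def by auto
      then show ?thesis using m(4) by (intro exI[of _ \<mu>'] exI[of _ r] exI[of _ 1]) auto
    next
      case False
      have "Gam u v \<mu> r = Gam u v \<mu>' (int u - r)" proof -
        have "int u - r = r" using 2 by linarith
        then show ?thesis using m(4) by simp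
      qed
      also have "\<dots> = (\<lambda>x. (-1) ^ (v + 1) * Gam u v (\<mu>' - ww u v) r x)" by (rule Rfl)
      also have "Gam u v (\<mu>' - ww u v) r = Gam u v (ww u v - \<mu>') r"
        by (rule ext) (metis Gam_neg minus_diff_eq)
      finally have G: "Gam u v \<mu> r = (\<lambda>x. (-1) ^ (v + 1) * Gam u v (ww u v - \<mu>') r x)" .
      have a1: "0 \<le> ww u v - \<mu>'" "2 * (ww u v - \<mu>') \<le> ww u v" using m False by auto
      have a2: "(ww u v - \<mu>') mod 2 = (r - 1) mod 2"
      proof -
        have "even (ww u v)" using eu wd by presburger
        then show ?thesis using m(3) p by presburger
      qed
      have "(ww u v - \<mu>', r) \<in> Bk u v" using a1 a2 2 eu unfolding Bk_def by simp
      then show ?thesis using G by blast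
    qed
  next
    case 3
    define r' where "r' = int u - r"
    have r': "1 \<le> r'" "2 * r' \<le> int u - 1" using 3 r unfolding r'_def by auto
    have p': "(\<mu> - ww u v) mod 2 = (r' - 1) mod 2" using p wd unfolding r'_def by presburger
    obtain \<mu>' where B: "(\<mu>', r') \<in> Bk u v" and E: "Gam u v (\<mu> - ww u v) r' = Gam u v \<mu>' r'"
      using caseA[OF w r' p'] by blast
    have "Gam u v \<mu> r = (\<lambda>x. (-1) ^ (v + 1) * Gam u v (\<mu> - ww u v) r' x)"
      using Rfl[of \<mu> r'] unfolding r'_def by simp
    then have "Gam u v \<mu> r = (\<lambda>x. (-1) ^ (v + 1) * Gam u v \<mu>' r' x)"
      unfolding E .
    then show ?thesis using B by blast
  qed
qed



theorem mainTheorem11: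
  fixes u v :: nat
  assumes "u \<ge> 2" and "v \<ge> 2" and "coprime u v" and "u < 2 * v"
  shows "cspan {Gam u v \<mu> r | \<mu> r. 1 \<le> r \<and> r \<le> int u - 1 \<and> \<mu> mod 2 = (r - 1) mod 2}
       = cspan {Gam u v \<mu> r | \<mu> r. (\<mu>, r) \<in> Bk u v}"
proof
  show "cspan {Gam u v \<mu> r | \<mu> r. 1 \<le> r \<and> r \<le> int u - 1 \<and> \<mu> mod 2 = (r - 1) mod 2}
       \<subseteq> cspan {Gam u v \<mu> r | \<mu> r. (\<mu>, r) \<in> Bk u v}"
  proof (rule cspan_scaled, safe)
    fix \<mu> r :: int
    assume h: "1 \<le> r" "r \<le> int u - 1" "\<mu> mod 2 = (r - 1) mod 2"
    obtain \<mu>' r' c where B: "(\<mu>', r') \<in> Bk u v" and E: "Gam u v \<mu> r = (\<lambda>x. c * Gam u v \<mu>' r' x)"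
      using reduce[OF assms(1,2,4) h] by blast
    have "Gam u v \<mu>' r' \<in> {Gam u v \<mu> r | \<mu> r. (\<mu>, r) \<in> Bk u v}" using B by blast
    then show "\<exists>g\<in>{Gam u v \<mu> r | \<mu> r. (\<mu>, r) \<in> Bk u v}. \<exists>c. Gam u v \<mu> r = (\<lambda>x. c * g x)"
      using E by (intro bexI[of _ "Gam u v \<mu>' r'"] exI[of _ c])
  qed
next
  show "cspan {Gam u v \<mu> r | \<mu> r. (\<mu>, r) \<in> Bk u v}
       \<subseteq> cspan {Gam u v \<mu> r | \<mu> r. 1 \<le> r \<and> r \<le> int u - 1 \<and> \<mu> mod 2 = (r - 1) mod 2}"
  proof (rule cspan_scaled, safe)
    fix \<mu> r :: int
    assume B: "(\<mu>, r) \<in> Bk u v"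
    then have "1 \<le> r \<and> r \<le> int u - 1 \<and> \<mu> mod 2 = (r - 1) mod 2"
      using assms(1) unfolding Bk_def by auto
    then have "Gam u v \<mu> r \<in> {Gam u v \<mu> r | \<mu> r. 1 \<le> r \<and> r \<le> int u - 1 \<and> \<mu> mod 2 = (r - 1) mod 2}"
      by blast
    then show "\<exists>g\<in>{Gam u v \<mu> r | \<mu> r. 1 \<le> r \<and> r \<le> int u - 1 \<and> \<mu> mod 2 = (r - 1) mod 2}.
        \<exists>c. Gam u v \<mu> r = (\<lambda>x. c * g x)"
      by (intro bexI[of _ "Gam u v \<mu> r"] exI[of _ 1]) auto
  qed
qed


end
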